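(* The category $\mathbb{O}$ is small and has pullbacks.
   Context: Fix a set $Act$ of action labels. An $Act$-labelled poset is $O=(X_O,\preccurlyeq_O,l_O)$ with $\preccurlyeq_O$ a partial order on the set $X_O$ and $l_O\colon X_O\to Act$. A morphism $O\to O'$ is a map $X_O\to X_{O'}$ that preserves order and labels; it is an order-embedding if moreover $\sigma(x)\preccurlyeq_{O'}\sigma(y)$ implies $x\preccurlyeq_O y$. $\mathcal{O}$ is the skeletal category of the category of finite $Act$-labelled posets and their morphisms (one chosen object per isomorphism class), and $\mathbb{O}$ is the subcategory of $\mathcal{O}$ with the same objects whose morphisms are the order-embeddings. *)

theory Defs
  imports "HOL-Library.FuncSet"
begin

text \<open>Finite Act-labelled posets; the set Act of labels is the type 'a.
  Representatives have carriers that are finite sets of natural numbers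
  (every finite labelled poset is isomorphic to one of these).\<close>

record 'a lposet =
  elems :: "nat set"
  ordr  :: "(nat \<times> nat) set"
  labl  :: "nat \<Rightarrow> 'a"

definition lposet :: "'a lposet \<Rightarrow> bool" where
  "lposet X \<longleftrightarrow> finite (elems X) \<and> ordr X \<subseteq> elems X \<times> elems X
     \<and> partial_order_on (elems X) (ordr X)
     \<and> (\<forall>x. x \<notin> elems X \<longrightarrow> labl X x = undefined)"

definition lp_hom :: "'a lposet \<Rightarrow> 'a lposet \<Rightarrow> (nat \<Rightarrow> nat) \<Rightarrow> bool" where
  "lp_hom X P f \<longleftrightarrow> f \<in> elems X \<rightarrow>\<^sub>E elems P
     \<and> (\<forall>x\<in>elems X. \<forall>y\<in>elems X. (x, y) \<in> ordr X \<longrightarrow> (f x, f y) \<in> ordr P)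
     \<and> (\<forall>x\<in>elems X. labl P (f x) = labl X x)"

definition lp_emb :: "'a lposet \<Rightarrow> 'a lposet \<Rightarrow> (nat \<Rightarrow> nat) \<Rightarrow> bool" where
  "lp_emb X P f \<longleftrightarrow> lp_hom X P f
     \<and> (\<forall>x\<in>elems X. \<forall>y\<in>elems X. (f x, f y) \<in> ordr P \<longrightarrow> (x, y) \<in> ordr X)"

definition lp_iso :: "'a lposet \<Rightarrow> 'a lposet \<Rightarrow> bool" where
  "lp_iso X P \<longleftrightarrow> (\<exists>f g. lp_hom X P f \<and> lp_hom P X g
     \<and> (\<forall>x\<in>elems X. g (f x) = x) \<and> (\<forall>y\<in>elems P. f (g y) = y))"

definition skel_rep :: "'a lposet \<Rightarrow> 'a lposet" where
  "skel_rep X = (SOME P. lposet P \<and> lp_iso P X)"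

definition OObj :: "'a lposet set" where
  "OObj = skel_rep ` {X. lposet X}"

type_synonym 'a arr = "'a lposet \<times> 'a lposet \<times> (nat \<Rightarrow> nat)"

definition adom :: "'a arr \<Rightarrow> 'a lposet" where "adom a = fst a"
definition acod :: "'a arr \<Rightarrow> 'a lposet" where "acod a = fst (snd a)"

definition OMor :: "'a arr set" where
  "OMor = {(X, P, f). X \<in> OObj \<and> P \<in> OObj \<and> lp_emb X P f}"

definition acomp :: "'a arr \<Rightarrow> 'a arr \<Rightarrow> 'a arr" where
  "acomp b a = (adom a, acod b, restrict (snd (snd b) \<circ> snd (snd a)) (elems (adom a)))"

definition aid :: "'a lposet \<Rightarrow> 'a arr" where
  "aid X = (X, X, restrict id (elems X))"

definition is_category :: "'o set \<Rightarrow> 'm set \<Rightarrow> ('m \<Rightarrow> 'o) \<Rightarrow> ('m \<Rightarrow> 'o)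
    \<Rightarrow> ('m \<Rightarrow> 'm \<Rightarrow> 'm) \<Rightarrow> ('o \<Rightarrow> 'm) \<Rightarrow> bool" where
  "is_category Ob Mo dm cd cp idt \<longleftrightarrow>
     (\<forall>a\<in>Mo. dm a \<in> Ob \<and> cd a \<in> Ob)
   \<and> (\<forall>X\<in>Ob. idt X \<in> Mo \<and> dm (idt X) = X \<and> cd (idt X) = X)
   \<and> (\<forall>a\<in>Mo. \<forall>b\<in>Mo. cd a = dm b \<longrightarrow>
        cp b a \<in> Mo \<and> dm (cp b a) = dm a \<and> cd (cp b a) = cd b)
   \<and> (\<forall>a\<in>Mo. cp a (idt (dm a)) = a \<and> cp (idt (cd a)) a = a)
   \<and> (\<forall>a\<in>Mo. \<forall>b\<in>Mo. \<forall>c\<in>Mo. cd a = dm b \<longrightarrow> cd b = dm c \<longrightarrow>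
        cp c (cp b a) = cp (cp c b) a)"

definition has_pullbacks :: "'o set \<Rightarrow> 'm set \<Rightarrow> ('m \<Rightarrow> 'o) \<Rightarrow> ('m \<Rightarrow> 'o)
    \<Rightarrow> ('m \<Rightarrow> 'm \<Rightarrow> 'm) \<Rightarrow> bool" where
  "has_pullbacks Ob Mo dm cd cp \<longleftrightarrow>
    (\<forall>f\<in>Mo. \<forall>g\<in>Mo. cd f = cd g \<longrightarrow>
      (\<exists>P\<in>Ob. \<exists>p1\<in>Mo. \<exists>p2\<in>Mo.
         dm p1 = P \<and> dm p2 = P \<and> cd p1 = dm f \<and> cd p2 = dm g
         \<and> cp f p1 = cp g p2
         \<and> (\<forall>Q\<in>Ob. \<forall>q1\<in>Mo. \<forall>q2\<in>Mo.
              dm q1 = Q \<and> dm q2 = Q \<and> cd q1 = dm f \<and> cd q2 = dm g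
              \<and> cp f q1 = cp g q2 \<longrightarrow>
              (\<exists>!u. u \<in> Mo \<and> dm u = Q \<and> cd u = P
                    \<and> cp p1 u = q1 \<and> cp p2 u = q2))))"

end

theory Submission
  imports Defs "HOL-Library.Nat_Bijection"
begin

lemma emb_id: "lp_emb X X (restrict id (elems X))"
  unfolding lp_emb_def lp_hom_def by auto

lemma emb_comp: assumes f: "lp_emb X Y f" and g: "lp_emb Y Z g"
  shows "lp_emb X Z (restrict (g \<circ> f) (elems X))"
proof -
  have fm: "\<forall>x\<in>elems X. f x \<in> elems Y" and gm: "\<forall>y\<in>elems Y. g y \<in> elems Z"
    using f g unfolding lp_emb_def lp_hom_def by (auto simp: PiE_def Pi_def)
  have fo: "\<forall>x\<in>elems X. \<forall>y\<in>elems X. (f x, f y) \<in> ordr Y \<longleftrightarrow> (x, y) \<in> ordr X"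
    using f unfolding lp_emb_def lp_hom_def by blast
  have go: "\<forall>x\<in>elems Y. \<forall>y\<in>elems Y. (g x, g y) \<in> ordr Z \<longleftrightarrow> (x, y) \<in> ordr Y"
    using g unfolding lp_emb_def lp_hom_def by blast
  have fl: "\<forall>x\<in>elems X. labl Y (f x) = labl X x" using f unfolding lp_emb_def lp_hom_def by blast
  have gl: "\<forall>x\<in>elems Y. labl Z (g x) = labl Y x" using g unfolding lp_emb_def lp_hom_def by blast
  show ?thesis unfolding lp_emb_def lp_hom_def
  proof (intro conjI ballI impI)
    show "restrict (g \<circ> f) (elems X) \<in> elems X \<rightarrow>\<^sub>E elems Z" using fm gm by auto
  next
    fix x y assume "x \<in> elems X" "y \<in> elems X" "(x, y) \<in> ordr X"
    then show "(restrict (g \<circ> f) (elems X) x, restrict (g \<circ> f) (elems X) y) \<in> ordr Z"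
      using fm fo go by simp
  next
    fix x assume "x \<in> elems X"
    then show "labl Z (restrict (g \<circ> f) (elems X) x) = labl X x" using fm fl gl by simp
  next
    fix x y assume "x \<in> elems X" "y \<in> elems X"
      "(restrict (g \<circ> f) (elems X) x, restrict (g \<circ> f) (elems X) y) \<in> ordr Z"
    then show "(x, y) \<in> ordr X" using fm fo go by simp
  qed
qed

lemma lp_iso_refl: "lp_iso X X"
  unfolding lp_iso_def using emb_id[of X] unfolding lp_emb_def by (intro exI[of _ "restrict id (elems X)"]) auto

lemma skel: assumes "lposet X"
  shows "lposet (skel_rep X) \<and> lp_iso (skel_rep X) X"
  unfolding skel_rep_def by (rule someI[of _ X]) (simp add: assms lp_iso_refl)

lemma OObj_lposet: "X \<in> OObj \<Longrightarrow> lposet X"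
  unfolding OObj_def using skel by auto

lemma iso_embs: assumes "lp_iso P X"
  obtains h k where "lp_emb P X h" "lp_emb X P k" "\<forall>x\<in>elems P. k (h x) = x" "\<forall>y\<in>elems X. h (k y) = y"
proof -
  obtain h k where hk: "lp_hom P X h" "lp_hom X P k" "\<forall>x\<in>elems P. k (h x) = x" "\<forall>y\<in>elems X. h (k y) = y"
    using assms unfolding lp_iso_def by blast
  have "lp_emb P X h"
    unfolding lp_emb_def using hk unfolding lp_hom_def by (metis PiE_mem)
  moreover have "lp_emb X P k"
    unfolding lp_emb_def using hk unfolding lp_hom_def by (metis PiE_mem)
  ultimately show ?thesis using hk that by blast
qed

lemma embD: assumes "lp_emb X P f"
  shows "\<And>x. x \<in> elems X \<Longrightarrow> f x \<in> elems P" "f \<in> extensional (elems X)"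
    "\<And>x y. x \<in> elems X \<Longrightarrow> y \<in> elems X \<Longrightarrow> (f x, f y) \<in> ordr P \<longleftrightarrow> (x, y) \<in> ordr X"
    "\<And>x. x \<in> elems X \<Longrightarrow> labl P (f x) = labl X x"
  using assms unfolding lp_emb_def lp_hom_def by (auto simp: PiE_def)

lemma category: "is_category (OObj :: 'a lposet set) OMor adom acod acomp aid"
  unfolding is_category_def
proof (intro conjI ballI impI)
  show "adom a \<in> OObj" "acod a \<in> OObj" if "a \<in> OMor" for a :: "'a arr"
    using that by (auto simp: OMor_def adom_def acod_def)
  fix X :: "'a lposet" assume "X \<in> OObj"
  then show "aid X \<in> OMor" "adom (aid X) = X" "acod (aid X) = X"
    by (auto simp: OMor_def aid_def adom_def acod_def emb_id)
next
  fix a b :: "'a arr" assume "a \<in> OMor" "b \<in> OMor" "acod a = adom b"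
  then show "acomp b a \<in> OMor" "adom (acomp b a) = adom a" "acod (acomp b a) = acod b"
    by (auto simp: OMor_def acomp_def adom_def acod_def intro: emb_comp)
next
  fix a :: "'a arr" assume "a \<in> OMor"
  then obtain X P f where a: "a = (X,P,f)" "lp_emb X P f" unfolding OMor_def by blast
  have e: "f \<in> extensional (elems X)" and m: "\<forall>x\<in>elems X. f x \<in> elems P"
    using embD(1,2)[OF a(2)] by blast+
  show "acomp a (aid (adom a)) = a"
    unfolding a acomp_def aid_def adom_def acod_def using e
    by (simp add: fun_eq_iff extensional_def)
  show "acomp (aid (acod a)) a = a"
    unfolding a acomp_def aid_def adom_def acod_def using e m
    by (simp add: fun_eq_iff extensional_def)
next
  fix a b c :: "'a arr" assume "a \<in> OMor" "b \<in> OMor" "c \<in> OMor" "acod a = adom b" "acod b = adom c"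
  then obtain X P f where a: "a = (X,P,f)" "lp_emb X P f" unfolding OMor_def by blast
  obtain Y Q g where b: "b = (Y,Q,g)" using prod_cases3 by blast
  have bP: "P = Y" using \<open>acod a = adom b\<close> unfolding a b adom_def acod_def by simp
  obtain W R r where c: "c = (W,R,r)" using prod_cases3 by blast
  have m: "\<forall>x\<in>elems X. f x \<in> elems P"
    using embD(1)[OF a(2)] by blast
  show "acomp c (acomp b a) = acomp (acomp c b) a"
    unfolding a b c acomp_def adom_def acod_def using m bP
    by (simp add: fun_eq_iff)
qed

lemma lposetD: assumes "lposet X"
  shows "finite (elems X)" "ordr X \<subseteq> elems X \<times> elems X"
    "\<And>x. x \<in> elems X \<Longrightarrow> (x,x) \<in> ordr X"
    "\<And>x y z. (x,y) \<in> ordr X \<Longrightarrow> (y,z) \<in> ordr X \<Longrightarrow> (x,z) \<in> ordr X"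
    "\<And>x y. (x,y) \<in> ordr X \<Longrightarrow> (y,x) \<in> ordr X \<Longrightarrow> x = y"
  using assms unfolding lposet_def partial_order_on_def preorder_on_def refl_on_def trans_on_def antisym_on_def
  by blast+

lemma embI: assumes "\<And>x. x \<in> elems X \<Longrightarrow> f x \<in> elems P" "f \<in> extensional (elems X)"
    "\<And>x y. x \<in> elems X \<Longrightarrow> y \<in> elems X \<Longrightarrow> (f x, f y) \<in> ordr P \<longleftrightarrow> (x, y) \<in> ordr X"
    "\<And>x. x \<in> elems X \<Longrightarrow> labl P (f x) = labl X x"
  shows "lp_emb X P f"
  using assms unfolding lp_emb_def lp_hom_def by (auto simp: PiE_def)

definition pbp :: "'a lposet \<Rightarrow> 'a lposet \<Rightarrow> (nat \<Rightarrow> nat) \<Rightarrow> (nat \<Rightarrow> nat) \<Rightarrow> (nat \<times> nat) set" where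
  "pbp X Y \<phi> \<psi> = {(x,y). x \<in> elems X \<and> y \<in> elems Y \<and> \<phi> x = \<psi> y}"

definition pb0 :: "'a lposet \<Rightarrow> 'a lposet \<Rightarrow> (nat \<Rightarrow> nat) \<Rightarrow> (nat \<Rightarrow> nat) \<Rightarrow> 'a lposet" where
  "pb0 X Y \<phi> \<psi> = \<lparr>elems = prod_encode ` pbp X Y \<phi> \<psi>,
     ordr = {(prod_encode a, prod_encode b) | a b. a \<in> pbp X Y \<phi> \<psi> \<and> b \<in> pbp X Y \<phi> \<psi>
              \<and> (fst a, fst b) \<in> ordr X \<and> (snd a, snd b) \<in> ordr Y},
     labl = (\<lambda>n. if n \<in> prod_encode ` pbp X Y \<phi> \<psi> then labl X (fst (prod_decode n)) else undefined)\<rparr>"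

lemma pb0_elems: "n \<in> elems (pb0 X Y \<phi> \<psi>) \<longleftrightarrow>
   (\<exists>x y. n = prod_encode (x,y) \<and> x \<in> elems X \<and> y \<in> elems Y \<and> \<phi> x = \<psi> y)"
  by (auto simp: pb0_def pbp_def)

lemma pb0_enc: "prod_encode (x,y) \<in> elems (pb0 X Y \<phi> \<psi>) \<longleftrightarrow>
   x \<in> elems X \<and> y \<in> elems Y \<and> \<phi> x = \<psi> y"
  by (auto simp: pb0_def pbp_def)

lemma pb0_ord: "(prod_encode (x,y), prod_encode (x',y')) \<in> ordr (pb0 X Y \<phi> \<psi>) \<longleftrightarrow>
   prod_encode (x,y) \<in> elems (pb0 X Y \<phi> \<psi>) \<and> prod_encode (x',y') \<in> elems (pb0 X Y \<phi> \<psi>)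
   \<and> (x,x') \<in> ordr X \<and> (y,y') \<in> ordr Y"
  by (auto simp: pb0_def pbp_def)

lemma pb0_ord_sub: "ordr (pb0 X Y \<phi> \<psi>) \<subseteq> elems (pb0 X Y \<phi> \<psi>) \<times> elems (pb0 X Y \<phi> \<psi>)"
  by (auto simp: pb0_def pbp_def)

lemma pb0_lab: "prod_encode (x,y) \<in> elems (pb0 X Y \<phi> \<psi>) \<Longrightarrow> labl (pb0 X Y \<phi> \<psi>) (prod_encode (x,y)) = labl X x"
  by (auto simp: pb0_def pbp_def)

lemma pb0_lposet: assumes "lposet X" "lposet Y"
  shows "lposet (pb0 X Y \<phi> \<psi>)"
proof -
  let ?P = "pb0 X Y \<phi> \<psi>"
  have fin: "finite (elems ?P)"
  proof -
    have "pbp X Y \<phi> \<psi> \<subseteq> elems X \<times> elems Y" by (auto simp: pbp_def)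
    then have "finite (pbp X Y \<phi> \<psi>)" using lposetD(1)[OF assms(1)] lposetD(1)[OF assms(2)]
      by (meson finite_SigmaI finite_subset)
    then show ?thesis by (simp add: pb0_def)
  qed
  have refl: "(n,n) \<in> ordr ?P" if "n \<in> elems ?P" for n
    using that lposetD(3)[OF assms(1)] lposetD(3)[OF assms(2)]
    by (auto simp: pb0_elems pb0_ord)
  have trans: "(n,k) \<in> ordr ?P" if "(n,m) \<in> ordr ?P" "(m,k) \<in> ordr ?P" for n m k
  proof -
    have "n \<in> elems ?P" "m \<in> elems ?P" "k \<in> elems ?P" using that pb0_ord_sub by blast+
    then obtain x y x' y' x'' y'' where e: "n = prod_encode (x,y)" "m = prod_encode (x',y')" "k = prod_encode (x'',y'')"
      by (meson pb0_elems)
    show ?thesis using that lposetD(4)[OF assms(1)] lposetD(4)[OF assms(2)] unfolding e pb0_ord by blast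
  qed
  have anti: "n = m" if "(n,m) \<in> ordr ?P" "(m,n) \<in> ordr ?P" for n m
  proof -
    have "n \<in> elems ?P" "m \<in> elems ?P" using that pb0_ord_sub by blast+
    then obtain x y x' y' where e: "n = prod_encode (x,y)" "m = prod_encode (x',y')"
      by (meson pb0_elems)
    show ?thesis using that lposetD(5)[OF assms(1)] lposetD(5)[OF assms(2)] unfolding e pb0_ord by blast
  qed
  have lab: "\<forall>x. x \<notin> elems ?P \<longrightarrow> labl ?P x = undefined" by (simp add: pb0_def)
  show ?thesis unfolding lposet_def partial_order_on_def preorder_on_def refl_on_def trans_on_def antisym_on_def
    using fin pb0_ord_sub refl trans anti lab by blast
qed

lemma pullbacks: "has_pullbacks (OObj :: 'a lposet set) OMor adom acod acomp"
  unfolding has_pullbacks_def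
proof (intro ballI impI)
  fix f g :: "'a arr" assume fM: "f \<in> OMor" and gM: "g \<in> OMor" and fg: "acod f = acod g"
  then obtain X Z \<phi> Y \<psi> where f: "f = (X,Z,\<phi>)" "lp_emb X Z \<phi>" "X \<in> OObj" "Z \<in> OObj"
      and g: "g = (Y,Z,\<psi>)" "lp_emb Y Z \<psi>" "Y \<in> OObj"
    by (auto simp: OMor_def acod_def)
  have lX: "lposet X" and lY: "lposet Y" using f g OObj_lposet by blast+
  define P0 where "P0 = pb0 X Y \<phi> \<psi>"
  have lP0: "lposet P0" unfolding P0_def using pb0_lposet[OF lX lY] .
  define P where "P = skel_rep P0"
  have PO: "P \<in> OObj" unfolding P_def OObj_def using lP0 by blast
  obtain h k where h: "lp_emb P P0 h" and k: "lp_emb P0 P k"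
     and kh: "\<forall>x\<in>elems P. k (h x) = x" and hk: "\<forall>y\<in>elems P0. h (k y) = y"
    using skel[OF lP0] iso_embs unfolding P_def by blast
  define \<pi>1 where "\<pi>1 = restrict (fst \<circ> prod_decode) (elems P0)"
  define \<pi>2 where "\<pi>2 = restrict (snd \<circ> prod_decode) (elems P0)"
  have ex: "\<exists>x y. n = prod_encode (x,y) \<and> x \<in> elems X \<and> y \<in> elems Y \<and> \<phi> x = \<psi> y"
    if "n \<in> elems P0" for n using that unfolding P0_def pb0_elems .
  have e1: "lp_emb P0 X \<pi>1"
  proof (rule embI)
    show "\<pi>1 x \<in> elems X" if "x \<in> elems P0" for x using ex[OF that] that by (auto simp: \<pi>1_def)
    show "\<pi>1 \<in> extensional (elems P0)" by (simp add: \<pi>1_def)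
    show "labl X (\<pi>1 x) = labl P0 x" if "x \<in> elems P0" for x
      using ex[OF that] that by (auto simp: \<pi>1_def P0_def pb0_lab)
    fix n m assume n: "n \<in> elems P0" and m: "m \<in> elems P0"
    obtain x y where ne: "n = prod_encode (x,y)" "x \<in> elems X" "y \<in> elems Y" "\<phi> x = \<psi> y" using ex[OF n] by blast
    obtain x' y' where me: "m = prod_encode (x',y')" "x' \<in> elems X" "y' \<in> elems Y" "\<phi> x' = \<psi> y'" using ex[OF m] by blast
    have "(x,x') \<in> ordr X \<longleftrightarrow> (y,y') \<in> ordr Y"
      using embD(3)[OF f(2) ne(2) me(2)] embD(3)[OF g(2) ne(3) me(3)] ne(4) me(4) by simp
    then show "(\<pi>1 n, \<pi>1 m) \<in> ordr X \<longleftrightarrow> (n, m) \<in> ordr P0"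
      using n m unfolding ne me \<pi>1_def P0_def pb0_ord by (auto simp: P0_def)
  qed
  have e2: "lp_emb P0 Y \<pi>2"
  proof (rule embI)
    show "\<pi>2 x \<in> elems Y" if "x \<in> elems P0" for x using ex[OF that] that by (auto simp: \<pi>2_def)
    show "\<pi>2 \<in> extensional (elems P0)" by (simp add: \<pi>2_def)
    show "labl Y (\<pi>2 n) = labl P0 n" if nP: "n \<in> elems P0" for n
    proof -
      obtain x y where ne: "n = prod_encode (x,y)" "x \<in> elems X" "y \<in> elems Y" "\<phi> x = \<psi> y" using ex[OF nP] by blast
      have "labl Y y = labl X x" using embD(4)[OF f(2) ne(2)] embD(4)[OF g(2) ne(3)] ne(4) by simp
      then show ?thesis using nP unfolding ne \<pi>2_def P0_def by (simp add: pb0_lab[folded P0_def] P0_def)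
    qed
    fix n m assume n: "n \<in> elems P0" and m: "m \<in> elems P0"
    obtain x y where ne: "n = prod_encode (x,y)" "x \<in> elems X" "y \<in> elems Y" "\<phi> x = \<psi> y" using ex[OF n] by blast
    obtain x' y' where me: "m = prod_encode (x',y')" "x' \<in> elems X" "y' \<in> elems Y" "\<phi> x' = \<psi> y'" using ex[OF m] by blast
    have "(x,x') \<in> ordr X \<longleftrightarrow> (y,y') \<in> ordr Y"
      using embD(3)[OF f(2) ne(2) me(2)] embD(3)[OF g(2) ne(3) me(3)] ne(4) me(4) by simp
    then show "(\<pi>2 n, \<pi>2 m) \<in> ordr Y \<longleftrightarrow> (n, m) \<in> ordr P0"
      using n m unfolding ne me \<pi>2_def P0_def pb0_ord by (auto simp: P0_def)
  qed
  define p1 where "p1 = (P, X, restrict (\<pi>1 \<circ> h) (elems P))"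
  define p2 where "p2 = (P, Y, restrict (\<pi>2 \<circ> h) (elems P))"
  have p1M: "p1 \<in> OMor" unfolding p1_def OMor_def using PO f(3) emb_comp[OF h e1] by blast
  have p2M: "p2 \<in> OMor" unfolding p2_def OMor_def using PO g(3) emb_comp[OF h e2] by blast
  have hP0: "h z \<in> elems P0" if "z \<in> elems P" for z using embD(1)[OF h that] .
  have comm: "acomp f p1 = acomp g p2"
  proof -
    have "\<phi> (\<pi>1 (h z)) = \<psi> (\<pi>2 (h z))" if "z \<in> elems P" for z
      using ex[OF hP0[OF that]] hP0[OF that] by (auto simp: \<pi>1_def \<pi>2_def)
    then show ?thesis unfolding f g p1_def p2_def acomp_def adom_def acod_def
      by (auto simp: fun_eq_iff)
  qed
  show "\<exists>P\<in>OObj. \<exists>p1\<in>OMor. \<exists>p2\<in>OMor.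
         adom p1 = P \<and> adom p2 = P \<and> acod p1 = adom f \<and> acod p2 = adom g
         \<and> acomp f p1 = acomp g p2
         \<and> (\<forall>Q\<in>OObj. \<forall>q1\<in>OMor. \<forall>q2\<in>OMor.
              adom q1 = Q \<and> adom q2 = Q \<and> acod q1 = adom f \<and> acod q2 = adom g
              \<and> acomp f q1 = acomp g q2 \<longrightarrow>
              (\<exists>!u. u \<in> OMor \<and> adom u = Q \<and> acod u = P
                    \<and> acomp p1 u = q1 \<and> acomp p2 u = q2))"
  proof (intro bexI conjI ballI impI)
    show "adom p1 = P" "adom p2 = P" "acod p1 = adom f" "acod p2 = adom g"
      by (simp_all add: p1_def p2_def f g adom_def acod_def)
    show "acomp f p1 = acomp g p2" by (rule comm)
    fix Q q1 q2 assume QO: "Q \<in> OObj" and q1M: "q1 \<in> OMor" and q2M: "q2 \<in> OMor"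
      and H: "adom q1 = Q \<and> adom q2 = Q \<and> acod q1 = adom f \<and> acod q2 = adom g \<and> acomp f q1 = acomp g q2"
    then obtain \<alpha> \<beta> where q1: "q1 = (Q,X,\<alpha>)" "lp_emb Q X \<alpha>" and q2: "q2 = (Q,Y,\<beta>)" "lp_emb Q Y \<beta>"
      by (auto simp: OMor_def adom_def acod_def f g)
    have cq: "\<phi> (\<alpha> z) = \<psi> (\<beta> z)" if "z \<in> elems Q" for z
    proof -
      have "restrict (\<phi> \<circ> \<alpha>) (elems Q) z = restrict (\<psi> \<circ> \<beta>) (elems Q) z"
        using H unfolding q1 q2 f g acomp_def adom_def acod_def by simp
      then show ?thesis using that by simp
    qed
    define \<sigma> where "\<sigma> = restrict (\<lambda>z. prod_encode (\<alpha> z, \<beta> z)) (elems Q)"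
    have \<sigma>P0: "\<sigma> z \<in> elems P0" if "z \<in> elems Q" for z
      using that embD(1)[OF q1(2) that] embD(1)[OF q2(2) that] cq[OF that]
      by (simp add: \<sigma>_def P0_def pb0_enc)
    have es: "lp_emb Q P0 \<sigma>"
    proof (rule embI)
      show "\<sigma> x \<in> elems P0" if "x \<in> elems Q" for x using \<sigma>P0[OF that] .
      show "\<sigma> \<in> extensional (elems Q)" by (simp add: \<sigma>_def)
      show "labl P0 (\<sigma> x) = labl Q x" if "x \<in> elems Q" for x
        using \<sigma>P0[OF that] that embD(4)[OF q1(2) that] by (simp add: \<sigma>_def P0_def pb0_lab)
      fix z z' assume z: "z \<in> elems Q" and z': "z' \<in> elems Q"
      show "(\<sigma> z, \<sigma> z') \<in> ordr P0 \<longleftrightarrow> (z, z') \<in> ordr Q"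
        using \<sigma>P0[OF z] \<sigma>P0[OF z'] z z' embD(3)[OF q1(2) z z'] embD(3)[OF q2(2) z z']
        by (auto simp: \<sigma>_def P0_def pb0_ord)
    qed
    define u where "u = (Q, P, restrict (k \<circ> \<sigma>) (elems Q))"
    have uM: "u \<in> OMor" unfolding u_def OMor_def using QO PO emb_comp[OF es k] by blast
    have hks: "h (k (\<sigma> z)) = \<sigma> z" if "z \<in> elems Q" for z using hk \<sigma>P0[OF that] by blast
    have kP: "k (\<sigma> z) \<in> elems P" if "z \<in> elems Q" for z using embD(1)[OF k \<sigma>P0[OF that]] .
    have ext1: "\<alpha> \<in> extensional (elems Q)" using embD(2)[OF q1(2)] .
    have ext2: "\<beta> \<in> extensional (elems Q)" using embD(2)[OF q2(2)] .
    have u1: "acomp p1 u = q1"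
      unfolding u_def p1_def q1 acomp_def adom_def acod_def
      using kP hks \<sigma>P0 ext1
      by (auto simp: fun_eq_iff \<pi>1_def \<sigma>_def extensional_def)
    have u2: "acomp p2 u = q2"
      unfolding u_def p2_def q2 acomp_def adom_def acod_def
      using kP hks \<sigma>P0 ext2
      by (auto simp: fun_eq_iff \<pi>2_def \<sigma>_def extensional_def)
    show "\<exists>!u. u \<in> OMor \<and> adom u = Q \<and> acod u = P \<and> acomp p1 u = q1 \<and> acomp p2 u = q2"
    proof (rule ex1I[of _ u])
      show "u \<in> OMor \<and> adom u = Q \<and> acod u = P \<and> acomp p1 u = q1 \<and> acomp p2 u = q2"
        using uM u1 u2 by (simp add: u_def adom_def acod_def)
      fix v assume v: "v \<in> OMor \<and> adom v = Q \<and> acod v = P \<and> acomp p1 v = q1 \<and> acomp p2 v = q2"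
      then obtain w where vw: "v = (Q,P,w)" "lp_emb Q P w" by (auto simp: OMor_def adom_def acod_def)
      have "w z = k (\<sigma> z)" if z: "z \<in> elems Q" for z
      proof -
        have wP: "w z \<in> elems P" using embD(1)[OF vw(2) z] .
        have a1: "\<pi>1 (h (w z)) = \<alpha> z"
        proof -
          have "restrict (restrict (\<pi>1 \<circ> h) (elems P) \<circ> w) (elems Q) z = \<alpha> z"
            using v unfolding vw p1_def q1 acomp_def adom_def acod_def by simp
          then show ?thesis using z wP by simp
        qed
        have a2: "\<pi>2 (h (w z)) = \<beta> z"
        proof -
          have "restrict (restrict (\<pi>2 \<circ> h) (elems P) \<circ> w) (elems Q) z = \<beta> z"
            using v unfolding vw p2_def q2 acomp_def adom_def acod_def by simp
          then show ?thesis using z wP by simp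
        qed
        have hw: "h (w z) \<in> elems P0" using hP0[OF wP] .
        have "h (w z) = prod_encode (\<pi>1 (h (w z)), \<pi>2 (h (w z)))"
          using hw by (simp add: \<pi>1_def \<pi>2_def)
        then have "h (w z) = \<sigma> z" using a1 a2 z by (simp add: \<sigma>_def)
        then show ?thesis using kh wP by metis
      qed
      moreover have "w \<in> extensional (elems Q)" using embD(2)[OF vw(2)] .
      ultimately have "w = restrict (k \<circ> \<sigma>) (elems Q)"
        by (auto simp: fun_eq_iff extensional_def)
      then show "v = u" by (simp add: vw u_def)
    qed
  qed (use PO p1M p2M in auto)
qed

theorem proposition6:
  shows "is_category (OObj :: 'a lposet set) OMor adom acod acomp aid
       \<and> has_pullbacks (OObj :: 'a lposet set) OMor adom acod acomp"
  using category pullbacks by blast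

end
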